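(* Let $1\to A\to E\xrightarrow{\pi} G\to 1$ be an extension of groups, let $z\in A$ be a central element of $E$ with $z^2=1$, and let $\bar z:=\pi(z)$. Then there exists a dynamical cocycle $(\alpha,\beta)$ of the symmetric quandle $(\operatorname{Core}(G),\bar z)$ over the family of sets $S=\{S_x\}_{x\in G}$ with $S_x=A$ (the underlying set of $(\operatorname{Core}(A),z)$) for every $x$, such that $(\operatorname{Core}(E),z)$ is isomorphic as a symmetric quandle to $(\operatorname{Core}(G),\bar z)\times_{(\alpha,\beta)}(\operatorname{Core}(A),z)$.
   Context: For a group $H$, the core quandle $\operatorname{Core}(H)$ is the set $H$ with $x*y=yx^{-1}y$. If $c\in H$ is central with $c^2=1$, then $y\mapsto yc$ is a good involution on $\operatorname{Core}(H)$, and the resulting symmetric quandle is denoted $(\operatorname{Core}(H),c)$. Here a quandle is a set with binary operation $*$ such that each $x\mapsto x*y$ is bijective (inverse $x\mapsto x*^{-1}y$), $(x*y)*z=(x*z)*(y*z)$ and $x*x=x$; a good involution is $\rho$ with $\rho^2=\mathrm{id}$, $\rho(x*y)=\rho(x)*y$, $x*\rho(y)=x*^{-1}y$; symmetric quandle homomorphisms preserve $*$ and commute with involutions. A dynamical cocycle of a symmetric quandle $(X,\rho)$ over a family of sets $S=\{S_x\}$ consists of maps $\alpha_{x,y}:S_x\times S_y\to S_{x*y}$, $\beta_x:S_x\to S_{\rho(x)}$ such that for all $x,y,z$, $s\in S_x,t\in S_y,w\in S_z$ (with $\alpha_{x,y}(t)(s):=\alpha_{x,y}(s,t)$): (1) $\alpha_{x,y}(t)$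 is bijective $S_x\to S_{x*y}$; (2) $\alpha_{x*y,z}(\alpha_{x,y}(s,t),w)=\alpha_{x*z,y*z}(\alpha_{x,z}(s,w),\alpha_{y,z}(t,w))$; (3) $\alpha_{\rho(x),y}(\beta_x(s),t)=\beta_{x*y}(\alpha_{x,y}(s,t))$; (4) $\beta_{\rho(x)}\beta_x(s)=s$; (5) $\alpha_{x,\rho(y)}(\beta_y(t))(s)=(\alpha_{x*^{-1}y,y}(t))^{-1}(s)$; (6) $\alpha_{x,x}(s,s)=s$. The extension $X\times_{(\alpha,\beta)}S$ is the set $\{(x,s)\mid x\in X,s\in S_x\}$ with $(x,s)*(y,t)=(x*y,\alpha_{x,y}(s,t))$ and involution $(x,s)\mapsto(\rho(x),\beta_x(s))$. *)

theory Defs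
  imports "HOL-Algebra.Algebra"
begin

definition core_op :: "('a, 'b) monoid_scheme \<Rightarrow> 'a \<Rightarrow> 'a \<Rightarrow> 'a" where
  "core_op H x y = y \<otimes>\<^bsub>H\<^esub> inv\<^bsub>H\<^esub> x \<otimes>\<^bsub>H\<^esub> y"

definition qinv :: "'x set \<Rightarrow> ('x \<Rightarrow> 'x \<Rightarrow> 'x) \<Rightarrow> 'x \<Rightarrow> 'x \<Rightarrow> 'x" where
  "qinv Q mul x y = the_inv_into Q (\<lambda>w. mul w y) x"

text \<open>Dynamical cocycle (alpha, beta) of a symmetric quandle (Q, mul, rho)
  over the family of sets S; alpha x y s t = alpha_{x,y}(s,t).\<close>
definition dyn_cocycle ::
  "'x set \<Rightarrow> ('x \<Rightarrow> 'x \<Rightarrow> 'x) \<Rightarrow> ('x \<Rightarrow> 'x) \<Rightarrow> ('x \<Rightarrow> 's set)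
   \<Rightarrow> ('x \<Rightarrow> 'x \<Rightarrow> 's \<Rightarrow> 's \<Rightarrow> 's) \<Rightarrow> ('x \<Rightarrow> 's \<Rightarrow> 's) \<Rightarrow> bool" where
  "dyn_cocycle Q mul rho S \<alpha> \<beta> \<longleftrightarrow>
     (\<forall>x\<in>Q. \<forall>y\<in>Q. \<forall>s\<in>S x. \<forall>t\<in>S y. \<alpha> x y s t \<in> S (mul x y)) \<and>
     (\<forall>x\<in>Q. \<forall>s\<in>S x. \<beta> x s \<in> S (rho x)) \<and>
     (\<forall>x\<in>Q. \<forall>y\<in>Q. \<forall>t\<in>S y. bij_betw (\<lambda>s. \<alpha> x y s t) (S x) (S (mul x y))) \<and>
     (\<forall>x\<in>Q. \<forall>y\<in>Q. \<forall>z\<in>Q. \<forall>s\<in>S x. \<forall>t\<in>S y. \<forall>w\<in>S z.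
        \<alpha> (mul x y) z (\<alpha> x y s t) w = \<alpha> (mul x z) (mul y z) (\<alpha> x z s w) (\<alpha> y z t w)) \<and>
     (\<forall>x\<in>Q. \<forall>y\<in>Q. \<forall>s\<in>S x. \<forall>t\<in>S y.
        \<alpha> (rho x) y (\<beta> x s) t = \<beta> (mul x y) (\<alpha> x y s t)) \<and>
     (\<forall>x\<in>Q. \<forall>s\<in>S x. \<beta> (rho x) (\<beta> x s) = s) \<and>
     (\<forall>x\<in>Q. \<forall>y\<in>Q. \<forall>s\<in>S x. \<forall>t\<in>S y.
        \<alpha> x (rho y) s (\<beta> y t) =
        the_inv_into (S (qinv Q mul x y)) (\<lambda>u. \<alpha> (qinv Q mul x y) y u t) s) \<and>
     (\<forall>x\<in>Q. \<forall>s\<in>S x. \<alpha> x x s s = s)"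

text \<open>The extension Q \<times>_(alpha,beta) S: carrier Sigma Q S, operation and involution.\<close>
definition ext_op ::
  "('x \<Rightarrow> 'x \<Rightarrow> 'x) \<Rightarrow> ('x \<Rightarrow> 'x \<Rightarrow> 's \<Rightarrow> 's \<Rightarrow> 's) \<Rightarrow> 'x \<times> 's \<Rightarrow> 'x \<times> 's \<Rightarrow> 'x \<times> 's" where
  "ext_op mul \<alpha> p q = (mul (fst p) (fst q), \<alpha> (fst p) (fst q) (snd p) (snd q))"

definition ext_rho :: "('x \<Rightarrow> 'x) \<Rightarrow> ('x \<Rightarrow> 's \<Rightarrow> 's) \<Rightarrow> 'x \<times> 's \<Rightarrow> 'x \<times> 's" where
  "ext_rho rho \<beta> p = (rho (fst p), \<beta> (fst p) (snd p))"

definition sq_iso ::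
  "'x set \<Rightarrow> ('x \<Rightarrow> 'x \<Rightarrow> 'x) \<Rightarrow> ('x \<Rightarrow> 'x) \<Rightarrow>
   'y set \<Rightarrow> ('y \<Rightarrow> 'y \<Rightarrow> 'y) \<Rightarrow> ('y \<Rightarrow> 'y) \<Rightarrow> ('x \<Rightarrow> 'y) \<Rightarrow> bool" where
  "sq_iso Q mul1 rho1 R mul2 rho2 f \<longleftrightarrow>
     bij_betw f Q R \<and>
     (\<forall>a\<in>Q. \<forall>b\<in>Q. f (mul1 a b) = mul2 (f a) (f b)) \<and>
     (\<forall>a\<in>Q. f (rho1 a) = rho2 (f a))"

end

theory Submission imports Defs begin
context group begin
lemma canc1[simp]: "x \<in> carrier G \<Longrightarrow> a \<in> carrier G \<Longrightarrow> x \<otimes> (inv x \<otimes> a) = a"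
  by (simp add: m_assoc[symmetric])
lemma canc2[simp]: "x \<in> carrier G \<Longrightarrow> a \<in> carrier G \<Longrightarrow> inv x \<otimes> (x \<otimes> a) = a"
  by (simp add: m_assoc[symmetric])
lemma core_closed: "a \<in> carrier G \<Longrightarrow> b \<in> carrier G \<Longrightarrow> core_op G a b \<in> carrier G"
  by (simp add: core_op_def)
lemma core_invol: "a \<in> carrier G \<Longrightarrow> b \<in> carrier G \<Longrightarrow> core_op G (core_op G a b) b = a"
  by (simp add: core_op_def inv_mult_group m_assoc)
lemma core_idem: "a \<in> carrier G \<Longrightarrow> core_op G a a = a"
  by (simp add: core_op_def m_assoc)
lemma core_sd: "a \<in> carrier G \<Longrightarrow> b \<in> carrier G \<Longrightarrow> c \<in> carrier G \<Longrightarrow>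
   core_op G (core_op G a b) c = core_op G (core_op G a c) (core_op G b c)"
  by (simp add: core_op_def inv_mult_group m_assoc)
lemma core_inj: "a \<in> carrier G \<Longrightarrow> a' \<in> carrier G \<Longrightarrow> b \<in> carrier G \<Longrightarrow> core_op G a b = core_op G a' b \<Longrightarrow> a = a'"
  by (metis core_invol)
lemma core_c1: assumes "a \<in> carrier G" "b \<in> carrier G" "c \<in> carrier G" "\<forall>e\<in>carrier G. c \<otimes> e = e \<otimes> c" "c \<otimes> c = \<one>"
  shows "core_op G (a \<otimes> c) b = core_op G a b \<otimes> c"
proof -
  have ic: "inv c = c" using assms(3,5) by (simp add: inv_equality)
  have cm: "c \<otimes> (inv a \<otimes> b) = (inv a \<otimes> b) \<otimes> c" using bspec[OF assms(4), of "inv a \<otimes> b"] assms(1-3) by simp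
  have "b \<otimes> inv (a \<otimes> c) \<otimes> b = b \<otimes> (c \<otimes> (inv a \<otimes> b))" using assms(1-3) by (simp add: inv_mult_group ic m_assoc)
  also have "\<dots> = b \<otimes> ((inv a \<otimes> b) \<otimes> c)" using cm by simp
  finally show ?thesis using assms(1-3) unfolding core_op_def by (simp add: m_assoc)
qed
lemma core_c2: assumes "a \<in> carrier G" "b \<in> carrier G" "c \<in> carrier G" "\<forall>e\<in>carrier G. c \<otimes> e = e \<otimes> c" "c \<otimes> c = \<one>"
  shows "core_op G a (b \<otimes> c) = core_op G a b"
proof -
  have cm: "c \<otimes> (inv a \<otimes> b) = (inv a \<otimes> b) \<otimes> c" using bspec[OF assms(4), of "inv a \<otimes> b"] assms(1-3) by simp
  have "b \<otimes> c \<otimes> inv a \<otimes> (b \<otimes> c) = b \<otimes> (c \<otimes> (inv a \<otimes> b)) \<otimes> c" using assms(1-3) by (simp add: m_assoc)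
  also have "\<dots> = b \<otimes> (inv a \<otimes> b) \<otimes> (c \<otimes> c)" using cm assms(1-3) by (simp add: m_assoc)
  finally show ?thesis using assms(1-3,5) unfolding core_op_def by (simp add: m_assoc)
qed
end

lemma core_hom:
  assumes "group_hom E G \<pi>" "a \<in> carrier E" "b \<in> carrier E"
  shows "\<pi> (core_op E a b) = core_op G (\<pi> a) (\<pi> b)"
proof -
  interpret group_hom E G \<pi> by fact
  show ?thesis using assms unfolding core_op_def by simp
qed

theorem corollary5p3:
  fixes A :: "('a, 'ma) monoid_scheme" and E :: "('e, 'me) monoid_scheme"
    and G :: "('g, 'mg) monoid_scheme"
    and \<iota> :: "'a \<Rightarrow> 'e" and \<pi> :: "'e \<Rightarrow> 'g" and z :: 'a
  assumes "group A" and "group E" and "group G"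
    and "\<iota> \<in> hom A E" and "inj_on \<iota> (carrier A)"
    and "\<pi> \<in> hom E G" and "\<pi> ` carrier E = carrier G"
    and "\<iota> ` carrier A = kernel E G \<pi>"
    and "z \<in> carrier A"
    and "\<forall>e\<in>carrier E. \<iota> z \<otimes>\<^bsub>E\<^esub> e = e \<otimes>\<^bsub>E\<^esub> \<iota> z"
    and "z \<otimes>\<^bsub>A\<^esub> z = \<one>\<^bsub>A\<^esub>"
  shows "\<exists>\<alpha> \<beta>.
    dyn_cocycle (carrier G) (core_op G) (\<lambda>y. y \<otimes>\<^bsub>G\<^esub> \<pi> (\<iota> z)) (\<lambda>_. carrier A) \<alpha> \<beta> \<and>
    (\<exists>f. sq_iso (carrier E) (core_op E) (\<lambda>y. y \<otimes>\<^bsub>E\<^esub> \<iota> z)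
               (Sigma (carrier G) (\<lambda>_. carrier A))
               (ext_op (core_op G) \<alpha>) (ext_rho (\<lambda>y. y \<otimes>\<^bsub>G\<^esub> \<pi> (\<iota> z)) \<beta>) f)"
proof -
  interpret A: group A by fact
  interpret E: group E by fact
  interpret G: group G by fact
  interpret hi: group_hom A E \<iota> using assms by (simp add: group_hom_def group_hom_axioms_def)
  interpret hp: group_hom E G \<pi> using assms by (simp add: group_hom_def group_hom_axioms_def)
  define c where "c = \<iota> z"
  have cE: "c \<in> carrier E" using assms c_def by simp
  have ccen: "\<forall>e\<in>carrier E. c \<otimes>\<^bsub>E\<^esub> e = e \<otimes>\<^bsub>E\<^esub> c" using assms c_def by simp
  have cc: "c \<otimes>\<^bsub>E\<^esub> c = \<one>\<^bsub>E\<^esub>" unfolding c_def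
    using hi.hom_mult[of z z] assms(9,11) hi.hom_one by simp
  define \<sigma> where "\<sigma> g = (SOME e. e \<in> carrier E \<and> \<pi> e = g)" for g
  have sig: "\<sigma> g \<in> carrier E \<and> \<pi> (\<sigma> g) = g" if "g \<in> carrier G" for g
  proof -
    have "g \<in> \<pi> ` carrier E" using that assms(7) by simp
    then have "\<exists>e. e \<in> carrier E \<and> \<pi> e = g" by (metis imageE)
    then show ?thesis unfolding \<sigma>_def by (rule someI_ex)
  qed
  define ii where "ii = the_inv_into (carrier A) \<iota>"
  have iii: "ii (\<iota> a) = a" if "a \<in> carrier A" for a
    unfolding ii_def using that assms(5) by (simp add: the_inv_into_f_f)
  have ker: "\<pi> (\<iota> a) = \<one>\<^bsub>G\<^esub>" if "a \<in> carrier A" for a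
    using that assms(8) unfolding kernel_def by blast
  define Em where "Em p = \<sigma> (fst p) \<otimes>\<^bsub>E\<^esub> \<iota> (snd p)" for p
  define f where "f e = (\<pi> e, ii (inv\<^bsub>E\<^esub> (\<sigma> (\<pi> e)) \<otimes>\<^bsub>E\<^esub> e))" for e
  define S where "S = Sigma (carrier G) (\<lambda>_. carrier A)"
  have L1: "Em p \<in> carrier E \<and> f (Em p) = p \<and> \<pi> (Em p) = fst p" if pS: "p \<in> S" for p
  proof -
    obtain x s where p: "p = (x,s)" "x \<in> carrier G" "s \<in> carrier A" using pS S_def by auto
    have sx: "\<sigma> x \<in> carrier E" "\<pi> (\<sigma> x) = x" using sig p by auto
    have iS: "\<iota> s \<in> carrier E" using p by simp
    have pe: "\<pi> (Em p) = x" using p sx iS ker[of s] unfolding Em_def by simp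
    have "inv\<^bsub>E\<^esub> (\<sigma> x) \<otimes>\<^bsub>E\<^esub> Em p = \<iota> s" unfolding Em_def using p sx iS
      by (simp add: E.m_assoc[symmetric])
    then show ?thesis using pe p sx iS iii unfolding f_def Em_def by simp
  qed
  have L2: "f e \<in> S \<and> Em (f e) = e" if "e \<in> carrier E" for e
  proof -
    have pe: "\<pi> e \<in> carrier G" using that by simp
    have s: "\<sigma> (\<pi> e) \<in> carrier E" "\<pi> (\<sigma> (\<pi> e)) = \<pi> e" using sig pe by auto
    define k where "k = inv\<^bsub>E\<^esub> (\<sigma> (\<pi> e)) \<otimes>\<^bsub>E\<^esub> e"
    have kE: "k \<in> carrier E" using s that k_def by simp
    have "\<pi> k = \<one>\<^bsub>G\<^esub>" using s that pe unfolding k_def by simp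
    then have "k \<in> kernel E G \<pi>" using kE unfolding kernel_def by simp
    then obtain a where a: "a \<in> carrier A" "k = \<iota> a" using assms(8) by (metis imageE)
    have "f e = (\<pi> e, a)" unfolding f_def using a iii k_def by simp
    moreover have "\<sigma> (\<pi> e) \<otimes>\<^bsub>E\<^esub> k = e" unfolding k_def using s that by (simp add: E.m_assoc[symmetric])
    ultimately show ?thesis using a pe unfolding S_def Em_def by simp
  qed
  define \<alpha> where "\<alpha> x y s t = snd (f (core_op E (Em (x,s)) (Em (y,t))))" for x y s t
  define \<beta> where "\<beta> x s = snd (f (Em (x,s) \<otimes>\<^bsub>E\<^esub> c))" for x s
  define \<rho> where "\<rho> = (\<lambda>y. y \<otimes>\<^bsub>G\<^esub> \<pi> (\<iota> z))"
  define Op where "Op = ext_op (core_op G) \<alpha>"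
  define Rh where "Rh = ext_rho \<rho> \<beta>"
  have K1: "Op p q = f (core_op E (Em p) (Em q))" if "p \<in> S" "q \<in> S" for p q
  proof -
    have "\<pi> (core_op E (Em p) (Em q)) = core_op G (fst p) (fst q)"
      using L1[OF that(1)] L1[OF that(2)] core_hom[OF hp.group_hom_axioms] by simp
    then show ?thesis unfolding Op_def ext_op_def \<alpha>_def f_def by simp
  qed
  have K2: "Rh p = f (Em p \<otimes>\<^bsub>E\<^esub> c)" if "p \<in> S" for p
  proof -
    have "\<pi> (Em p \<otimes>\<^bsub>E\<^esub> c) = \<rho> (fst p)"
      using L1[OF that] cE unfolding \<rho>_def c_def by simp
    then show ?thesis unfolding Rh_def ext_rho_def \<beta>_def f_def by simp
  qed
  have OpS: "Op p q \<in> S" if "p \<in> S" "q \<in> S" for p q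
    using K1[OF that] L1[OF that(1)] L1[OF that(2)] L2 E.core_closed by simp
  have RhS: "Rh p \<in> S" if "p \<in> S" for p
    using K2[OF that] L1 that L2 cE by simp
  have EmOp: "Em (Op p q) = core_op E (Em p) (Em q)" if "p \<in> S" "q \<in> S" for p q
    using K1[OF that] L1 that L2 E.core_closed by simp
  have EmRh: "Em (Rh p) = Em p \<otimes>\<^bsub>E\<^esub> c" if "p \<in> S" for p
    using K2[OF that] L1 that L2 cE by simp
  have Inv: "Op (Op p q) q = p" if "p \<in> S" "q \<in> S" for p q
    using K1[OF OpS[OF that] that(2)] EmOp[OF that] L1 that E.core_invol by simp
  have SD: "Op (Op p q) r = Op (Op p r) (Op q r)" if "p \<in> S" "q \<in> S" "r \<in> S" for p q r
    using K1[OF OpS[OF that(1,2)] that(3)] K1[OF OpS[OF that(1,3)] OpS[OF that(2,3)]]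
      EmOp that L1 E.core_sd by simp
  have RhOp: "Op (Rh p) q = Rh (Op p q)" if "p \<in> S" "q \<in> S" for p q
    using K1[OF RhS[OF that(1)] that(2)] K2[OF OpS[OF that]] EmOp[OF that] EmRh[OF that(1)]
      L1 that E.core_c1[OF _ _ cE ccen cc] by simp
  have RhRh: "Rh (Rh p) = p" if "p \<in> S" for p
    using K2[OF RhS[OF that]] EmRh[OF that] L1[OF that] cE cc by (simp add: E.m_assoc)
  have OpRh: "Op p (Rh q) = Op p q" if "p \<in> S" "q \<in> S" for p q
    using K1[OF that(1) RhS[OF that(2)]] K1[OF that] EmRh[OF that(2)]
      L1 that E.core_c2[OF _ _ cE ccen cc] by simp
  have Idem: "Op p p = p" if "p \<in> S" for p
    using K1[OF that that] L1[OF that] E.core_idem by simp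
  have Opeq: "Op (x,s) (y,t) = (core_op G x y, \<alpha> x y s t)" for x y s t
    unfolding Op_def ext_op_def by simp
  have Rheq: "Rh (x,s) = (\<rho> x, \<beta> x s)" for x s
    unfolding Rh_def ext_rho_def by simp
  have mem: "(x,s) \<in> S \<longleftrightarrow> x \<in> carrier G \<and> s \<in> carrier A" for x s unfolding S_def by simp
  have C1: "\<alpha> x y s t \<in> carrier A" if "x \<in> carrier G" "y \<in> carrier G" "s \<in> carrier A" "t \<in> carrier A" for x y s t
    using OpS[of "(x,s)" "(y,t)"] that Opeq mem by simp
  have C2: "\<beta> x s \<in> carrier A" if "x \<in> carrier G" "s \<in> carrier A" for x s
    using RhS[of "(x,s)"] that Rheq mem by simp
  have C3: "bij_betw (\<lambda>s. \<alpha> x y s t) (carrier A) (carrier A)" if "x \<in> carrier G" "y \<in> carrier G" "t \<in> carrier A" for x y t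
  proof (rule bij_betw_byWitness[where f'="\<lambda>u. \<alpha> (core_op G x y) y u t"])
    show "\<forall>s\<in>carrier A. \<alpha> (core_op G x y) y (\<alpha> x y s t) t = s"
    proof
      fix s assume s: "s \<in> carrier A"
      have "Op (Op (x,s) (y,t)) (y,t) = (x,s)" using Inv that s mem by simp
      then show "\<alpha> (core_op G x y) y (\<alpha> x y s t) t = s" using Opeq by simp
    qed
    show "\<forall>u\<in>carrier A. \<alpha> x y (\<alpha> (core_op G x y) y u t) t = u"
    proof
      fix u assume u: "u \<in> carrier A"
      have xy: "core_op G x y \<in> carrier G" using that G.core_closed by simp
      have "Op (Op (core_op G x y, u) (y,t)) (y,t) = (core_op G x y, u)"
        using Inv xy u that mem by simp
      then show "\<alpha> x y (\<alpha> (core_op G x y) y u t) t = u"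
        using Opeq G.core_invol that by simp
    qed
    show "(\<lambda>s. \<alpha> x y s t) ` carrier A \<subseteq> carrier A" using C1 that by auto
    show "(\<lambda>u. \<alpha> (core_op G x y) y u t) ` carrier A \<subseteq> carrier A" using C1 that G.core_closed by auto
  qed
  have qi: "qinv (carrier G) (core_op G) x y = core_op G x y" if "x \<in> carrier G" "y \<in> carrier G" for x y
  proof -
    have "inj_on (\<lambda>w. core_op G w y) (carrier G)"
      using G.core_inj that by (meson inj_onI)
    moreover have "core_op G (core_op G x y) y = x" using G.core_invol that by simp
    ultimately show ?thesis unfolding qinv_def
      by (rule the_inv_into_f_eq) (use G.core_closed that in simp)
  qed
  have cocyc: "dyn_cocycle (carrier G) (core_op G) \<rho> (\<lambda>_. carrier A) \<alpha> \<beta>"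
    unfolding dyn_cocycle_def
  proof (intro conjI ballI)
    show "\<alpha> x y s t \<in> carrier A" if "x \<in> carrier G" "y \<in> carrier G" "s \<in> carrier A" "t \<in> carrier A" for x y s t
      using C1 that by simp
    show "\<beta> x s \<in> carrier A" if "x \<in> carrier G" "s \<in> carrier A" for x s
      using C2 that by simp
    show "bij_betw (\<lambda>s. \<alpha> x y s t) (carrier A) (carrier A)" if "x \<in> carrier G" "y \<in> carrier G" "t \<in> carrier A" for x y t
      using C3 that by simp
    show "\<alpha> (core_op G x y) w (\<alpha> x y s t) u = \<alpha> (core_op G x w) (core_op G y w) (\<alpha> x w s u) (\<alpha> y w t u)"
      if "x \<in> carrier G" "y \<in> carrier G" "w \<in> carrier G" "s \<in> carrier A" "t \<in> carrier A" "u \<in> carrier A" for x y w s t u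
      using SD[of "(x,s)" "(y,t)" "(w,u)"] that mem Opeq by simp
    show "\<alpha> (\<rho> x) y (\<beta> x s) t = \<beta> (core_op G x y) (\<alpha> x y s t)"
      if "x \<in> carrier G" "y \<in> carrier G" "s \<in> carrier A" "t \<in> carrier A" for x y s t
      using RhOp[of "(x,s)" "(y,t)"] that mem Opeq Rheq by simp
    show "\<beta> (\<rho> x) (\<beta> x s) = s" if "x \<in> carrier G" "s \<in> carrier A" for x s
      using RhRh[of "(x,s)"] that mem Rheq by simp
    show "\<alpha> x (\<rho> y) s (\<beta> y t) = the_inv_into (carrier A) (\<lambda>u. \<alpha> (qinv (carrier G) (core_op G) x y) y u t) s"
      if "x \<in> carrier G" "y \<in> carrier G" "s \<in> carrier A" "t \<in> carrier A" for x y s t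
    proof -
      have xy: "core_op G x y \<in> carrier G" using that G.core_closed by simp
      have l: "\<alpha> x (\<rho> y) s (\<beta> y t) = \<alpha> x y s t"
        using OpRh[of "(x,s)" "(y,t)"] that mem Opeq Rheq by simp
      have inj: "inj_on (\<lambda>u. \<alpha> (core_op G x y) y u t) (carrier A)"
        using C3[OF xy that(2,4)] bij_betw_imp_inj_on by blast
      have "\<alpha> (core_op G x y) y (\<alpha> x y s t) t = s"
        using Inv[of "(x,s)" "(y,t)"] that mem Opeq by simp
      then have "the_inv_into (carrier A) (\<lambda>u. \<alpha> (core_op G x y) y u t) s = \<alpha> x y s t"
        by (rule the_inv_into_f_eq[OF inj _ C1[OF that]])
      then show ?thesis using l qi that by simp
    qed
    show "\<alpha> x x s s = s" if "x \<in> carrier G" "s \<in> carrier A" for x s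
      using Idem[of "(x,s)"] that mem Opeq by simp
  qed
  have iso: "sq_iso (carrier E) (core_op E) (\<lambda>y. y \<otimes>\<^bsub>E\<^esub> \<iota> z) S Op Rh f"
    unfolding sq_iso_def
  proof (intro conjI ballI)
    show "bij_betw f (carrier E) S"
      by (rule bij_betw_byWitness[where f'=Em]) (use L1 L2 in auto)
    show "f (core_op E a b) = Op (f a) (f b)" if "a \<in> carrier E" "b \<in> carrier E" for a b
      using K1[of "f a" "f b"] L2 that by simp
    show "f (a \<otimes>\<^bsub>E\<^esub> \<iota> z) = Rh (f a)" if "a \<in> carrier E" for a
      using K2[of "f a"] L2 that c_def by simp
  qed
  show ?thesis using cocyc iso unfolding S_def Op_def Rh_def \<rho>_def by blast
qed

end
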